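(* Let $\Gamma$ be a connected signed graph with $n$ vertices and $m$ edges, with Laplacian eigenvalues $\mu_1\ge\cdots\ge\mu_n\ge 0$. Let $p$ be a positive integer and $k\in\{p,p-1\}$. Then the adjacency spectrum of $S_p^k(\Gamma)$, as a multiset, is: if $\Gamma$ is balanced: $0$ with multiplicity $(p-1)n+(k+1)m+2$, together with $\pm\sqrt{(p+1)(k+1)\mu_i}$ for $i=1,\dots,n-1$; if $\Gamma$ is unbalanced: $0$ with multiplicity $(p-1)n+(k+1)m$, together with $\pm\sqrt{(p+1)(k+1)\mu_i}$ for $i=1,\dots,n$.
   Context: A signed graph $\Gamma=(G,\sigma)$ is a simple graph $G$ with a sign function $\sigma:E(G)\to\{1,-1\}$; its adjacency matrix $A(\Gamma)$ has $(i,j)$ entry $\sigma(v_iv_j)$ if $v_iv_j\in E(G)$ and $0$ otherwise, and its Laplacian matrix is $L(\Gamma)=D(G)-A(\Gamma)$ with $D(G)$ the diagonal degree matrix. $\Gamma$ is balanced if every cycle has an even number of negative edges, unbalanced otherwise. Orientation: for $\Gamma$ with vertices $v_1,\dots,v_n$ and edges $e_1,\dots,e_m$, fix $\vartheta(v,e)\in\{1,-1\}$ for each vertex $v$ incident with edge $e$, such that for every edge $e=vw$, $\vartheta(v,e)\vartheta(w,e)=-\sigma(e)$. The signed graph $S_p^k(\Gamma)$ (for integers $p\ge1$, $k\ge 0$): its vertex set is $\{v_i^{(s)}:1\le i\le n,\ 0\le s\le p\}\cup\{e_j^{(t)}:1\le j\le m,\ 0\le t\le k\}$; its edges are exactly the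 pairs $v_i^{(s)}e_j^{(t)}$ with $v_i$ an end of $e_j$ in $G$, of sign $\vartheta(v_i,e_j)$. Equivalently, starting from the signed subdivision graph $S(\Gamma)$, one adds $p$ copies of each original vertex $v_i$ joined to the neighbours of $v_i$ with the same signs, and then $k$ copies of each edge-vertex $e_j$ joined to all (old and new) neighbours of $e_j$ with the same signs. It has $(p+1)n+(k+1)m$ vertices and $2(p+1)(k+1)m$ edges. *)

theory Defs
  imports "Jordan_Normal_Form.Char_Poly" "HOL-Library.Multiset"
begin

text \<open>Signed graphs on the vertex set {0..<n}, with edges indexed by {0..<m}:
  edge j has end vertices ends j = (a, b) and sign sg j.\<close>

definition edge_set :: "(nat \<Rightarrow> nat \<times> nat) \<Rightarrow> nat \<Rightarrow> nat set" where
  "edge_set ends j = {fst (ends j), snd (ends j)}"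

definition signed_graph ::
  "nat \<Rightarrow> nat \<Rightarrow> (nat \<Rightarrow> nat \<times> nat) \<Rightarrow> (nat \<Rightarrow> real) \<Rightarrow> bool" where
  "signed_graph n m ends sg \<longleftrightarrow>
     (\<forall>j<m. fst (ends j) < n \<and> snd (ends j) < n \<and> fst (ends j) \<noteq> snd (ends j)
            \<and> (sg j = 1 \<or> sg j = -1))
   \<and> (\<forall>j<m. \<forall>j'<m. j \<noteq> j' \<longrightarrow> edge_set ends j \<noteq> edge_set ends j')"

definition adjacent :: "nat \<Rightarrow> (nat \<Rightarrow> nat \<times> nat) \<Rightarrow> nat \<Rightarrow> nat \<Rightarrow> bool" where
  "adjacent m ends u v \<longleftrightarrow> (\<exists>j<m. edge_set ends j = {u, v})"

definition connected_graph :: "nat \<Rightarrow> nat \<Rightarrow> (nat \<Rightarrow> nat \<times> nat) \<Rightarrow> bool" where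
  "connected_graph n m ends \<longleftrightarrow> n \<ge> 1 \<and>
     (\<forall>u<n. \<forall>v<n. (adjacent m ends)\<^sup>*\<^sup>* u v)"

definition is_cycle :: "nat \<Rightarrow> nat \<Rightarrow> (nat \<Rightarrow> nat \<times> nat) \<Rightarrow> nat list \<Rightarrow> nat list \<Rightarrow> bool" where
  "is_cycle n m ends vs es \<longleftrightarrow>
     length vs \<ge> 3 \<and> length es = length vs \<and> distinct vs \<and> distinct es
     \<and> set vs \<subseteq> {..<n} \<and> set es \<subseteq> {..<m}
     \<and> (\<forall>i<length vs. edge_set ends (es ! i) = {vs ! i, vs ! ((i + 1) mod length vs)})"

definition balanced :: "nat \<Rightarrow> nat \<Rightarrow> (nat \<Rightarrow> nat \<times> nat) \<Rightarrow> (nat \<Rightarrow> real) \<Rightarrow> bool" where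
  "balanced n m ends sg \<longleftrightarrow>
     (\<forall>vs es. is_cycle n m ends vs es \<longrightarrow> even (card {j \<in> set es. sg j = -1}))"

definition adj_matrix :: "nat \<Rightarrow> nat \<Rightarrow> (nat \<Rightarrow> nat \<times> nat) \<Rightarrow> (nat \<Rightarrow> real) \<Rightarrow> real mat" where
  "adj_matrix n m ends sg =
     mat n n (\<lambda>(u, v). \<Sum>j<m. if edge_set ends j = {u, v} then sg j else 0)"

definition degree :: "nat \<Rightarrow> (nat \<Rightarrow> nat \<times> nat) \<Rightarrow> nat \<Rightarrow> nat" where
  "degree m ends u = card {j. j < m \<and> u \<in> edge_set ends j}"

definition laplacian :: "nat \<Rightarrow> nat \<Rightarrow> (nat \<Rightarrow> nat \<times> nat) \<Rightarrow> (nat \<Rightarrow> real) \<Rightarrow> real mat" where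
  "laplacian n m ends sg =
     mat n n (\<lambda>(u, v). if u = v then real (degree m ends u) else 0) - adj_matrix n m ends sg"

definition orientation ::
  "nat \<Rightarrow> (nat \<Rightarrow> nat \<times> nat) \<Rightarrow> (nat \<Rightarrow> real) \<Rightarrow> (nat \<Rightarrow> nat \<Rightarrow> real) \<Rightarrow> bool" where
  "orientation m ends sg th \<longleftrightarrow>
     (\<forall>j<m. (th (fst (ends j)) j = 1 \<or> th (fst (ends j)) j = -1)
          \<and> (th (snd (ends j)) j = 1 \<or> th (snd (ends j)) j = -1)
          \<and> th (fst (ends j)) j * th (snd (ends j)) j = - sg j)"

text \<open>Vertex v_i^(s) (i<n, s\<le>p) has index s*n+i;
  edge-vertex e_j^(t) (j<m, t\<le>k) has index (p+1)*n + t*m + j.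
  v_i^(s) and e_j^(t) are adjacent iff i is an end of e_j, with sign th i j.\<close>
definition Spk_entry ::
  "nat \<Rightarrow> nat \<Rightarrow> (nat \<Rightarrow> nat \<times> nat) \<Rightarrow> (nat \<Rightarrow> nat \<Rightarrow> real) \<Rightarrow> nat \<Rightarrow> nat \<Rightarrow> nat \<Rightarrow> real" where
  "Spk_entry n m ends th p x y =
     (if x < (p+1)*n \<and> y \<ge> (p+1)*n then
        (let i = x mod n; j = (y - (p+1)*n) mod m in
          if i \<in> edge_set ends j then th i j else 0)
      else 0)"

definition Spk_adj ::
  "nat \<Rightarrow> nat \<Rightarrow> (nat \<Rightarrow> nat \<times> nat) \<Rightarrow> (nat \<Rightarrow> nat \<Rightarrow> real) \<Rightarrow> nat \<Rightarrow> nat \<Rightarrow> real mat" where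
  "Spk_adj n m ends th p k =
     mat ((p+1)*n + (k+1)*m) ((p+1)*n + (k+1)*m)
       (\<lambda>(x, y). Spk_entry n m ends th p x y + Spk_entry n m ends th p y x)"

definition spectrum_mset :: "real mat \<Rightarrow> real multiset \<Rightarrow> bool" where
  "spectrum_mset A M \<longleftrightarrow> char_poly A = (\<Prod>a\<in>#M. [:- a, 1:])"

end

theory Submission
  imports Defs
begin


lemma S2:
  fixes X Y :: "real mat"
  assumes X: "X \<in> carrier_mat r n" and Y: "Y \<in> carrier_mat n r" and y: "y \<noteq> 0"
  shows "y ^ n * det (y \<cdot>\<^sub>m 1\<^sub>m r - X * Y) = y ^ r * det (y \<cdot>\<^sub>m 1\<^sub>m n - Y * X)"
proof -
  define M where "M = four_block_mat (y \<cdot>\<^sub>m 1\<^sub>m n) Y X (1\<^sub>m r)"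
  have Mc: "M \<in> carrier_mat (n+r) (n+r)" unfolding M_def using X Y by auto
  define F1 where "F1 = four_block_mat (1\<^sub>m n) (0\<^sub>m n r) (-X) (1\<^sub>m r)"
  have F1c: "F1 \<in> carrier_mat (n+r) (n+r)" unfolding F1_def using X Y by auto
  have "M * F1 = four_block_mat (y \<cdot>\<^sub>m 1\<^sub>m n * 1\<^sub>m n + Y * (-X)) (y \<cdot>\<^sub>m 1\<^sub>m n * 0\<^sub>m n r + Y * 1\<^sub>m r)
      (X * 1\<^sub>m n + 1\<^sub>m r * (-X)) (X * 0\<^sub>m n r + 1\<^sub>m r * 1\<^sub>m r)"
    unfolding M_def F1_def by (rule mult_four_block_mat, insert X Y, auto)
  also have "\<dots> = four_block_mat (y \<cdot>\<^sub>m 1\<^sub>m n - Y * X) Y (0\<^sub>m r n) (1\<^sub>m r)"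
    using X Y by (intro arg_cong4[where f=four_block_mat]; (rule eq_matI)?) (auto simp: mult_minus_distrib_mat)
  finally have e1: "M * F1 = four_block_mat (y \<cdot>\<^sub>m 1\<^sub>m n - Y * X) Y (0\<^sub>m r n) (1\<^sub>m r)" .
  have "det F1 = 1" unfolding F1_def
    by (subst det_four_block_mat_upper_right_zero[of _ n _ r], insert X, auto)
  hence "det M = det (M * F1)" using det_mult[OF Mc F1c] by simp
  also have "\<dots> = det (y \<cdot>\<^sub>m 1\<^sub>m n - Y * X)" unfolding e1
    by (subst det_four_block_mat_lower_left_zero[of _ n _ r], insert X Y, auto)
  finally have d1: "det M = det (y \<cdot>\<^sub>m 1\<^sub>m n - Y * X)" .
  define F2 where "F2 = four_block_mat (1\<^sub>m n) (- ((1/y) \<cdot>\<^sub>m Y)) (0\<^sub>m r n) (1\<^sub>m r)"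
  have F2c: "F2 \<in> carrier_mat (n+r) (n+r)" unfolding F2_def using X Y by auto
  have "M * F2 = four_block_mat (y \<cdot>\<^sub>m 1\<^sub>m n * 1\<^sub>m n + Y * 0\<^sub>m r n) (y \<cdot>\<^sub>m 1\<^sub>m n * (- ((1/y) \<cdot>\<^sub>m Y)) + Y * 1\<^sub>m r)
      (X * 1\<^sub>m n + 1\<^sub>m r * 0\<^sub>m r n) (X * (- ((1/y) \<cdot>\<^sub>m Y)) + 1\<^sub>m r * 1\<^sub>m r)"
    unfolding M_def F2_def by (rule mult_four_block_mat, insert X Y, auto)
  also have "\<dots> = four_block_mat (y \<cdot>\<^sub>m 1\<^sub>m n) (0\<^sub>m n r) X ((1/y) \<cdot>\<^sub>m (y \<cdot>\<^sub>m 1\<^sub>m r - X * Y))"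
  proof -
    have a: "y \<cdot>\<^sub>m 1\<^sub>m n * (- ((1/y) \<cdot>\<^sub>m Y)) = - Y"
      using Y y by (subst mult_smult_assoc_mat[of _ n n], auto simp: mult_minus_distrib_mat mult_smult_distrib[of _ n n])
    show ?thesis unfolding a
      using X Y y by (intro arg_cong4[where f=four_block_mat]; (rule eq_matI)?) (auto simp: mult_minus_distrib_mat scalar_prod_def sum_distrib_left field_simps)
  qed
  finally have e2: "M * F2 = four_block_mat (y \<cdot>\<^sub>m 1\<^sub>m n) (0\<^sub>m n r) X ((1/y) \<cdot>\<^sub>m (y \<cdot>\<^sub>m 1\<^sub>m r - X * Y))" .
  have "det F2 = 1" unfolding F2_def
    by (subst det_four_block_mat_lower_left_zero[of _ n _ r], insert Y, auto)
  hence "det M = det (M * F2)" using det_mult[OF Mc F2c] by simp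
  also have "\<dots> = y ^ n * ((1/y) ^ r * det (y \<cdot>\<^sub>m 1\<^sub>m r - X * Y))" unfolding e2
    by (subst det_four_block_mat_upper_right_zero[of _ n _ r], insert X Y, auto)
  finally have d2: "det M = y ^ n * ((1/y) ^ r * det (y \<cdot>\<^sub>m 1\<^sub>m r - X * Y))" .
  from d1 d2 have "y ^ r * det (y \<cdot>\<^sub>m 1\<^sub>m n - Y * X) = y ^ r * (y ^ n * ((1/y) ^ r * det (y \<cdot>\<^sub>m 1\<^sub>m r - X * Y)))" by simp
  also have "\<dots> = y ^ n * det (y \<cdot>\<^sub>m 1\<^sub>m r - X * Y)" using y by (simp add: power_one_over field_simps)
  finally show ?thesis by simp
qed

lemma S1:
  fixes B C :: "real mat"
  assumes B: "B \<in> carrier_mat r s" and C: "C \<in> carrier_mat s r" and x: "x \<noteq> 0"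
  shows "x ^ r * det (x \<cdot>\<^sub>m 1\<^sub>m (r+s) - four_block_mat (0\<^sub>m r r) B C (0\<^sub>m s s))
     = x ^ s * det ((x^2) \<cdot>\<^sub>m 1\<^sub>m r - B * C)"
proof -
  define M where "M = four_block_mat (x \<cdot>\<^sub>m 1\<^sub>m r) (-B) (-C) (x \<cdot>\<^sub>m 1\<^sub>m s)"
  have Meq: "x \<cdot>\<^sub>m 1\<^sub>m (r+s) - four_block_mat (0\<^sub>m r r) B C (0\<^sub>m s s) = M"
    unfolding M_def using B C by (intro eq_matI) auto
  have Mc: "M \<in> carrier_mat (r+s) (r+s)" unfolding M_def using B C by auto
  define F where "F = four_block_mat (1\<^sub>m r) (0\<^sub>m r s) ((1/x) \<cdot>\<^sub>m C) (1\<^sub>m s)"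
  have Fc: "F \<in> carrier_mat (r+s) (r+s)" unfolding F_def using B C by auto
  have "M * F = four_block_mat (x \<cdot>\<^sub>m 1\<^sub>m r * 1\<^sub>m r + (-B) * ((1/x) \<cdot>\<^sub>m C)) (x \<cdot>\<^sub>m 1\<^sub>m r * 0\<^sub>m r s + (-B) * 1\<^sub>m s)
      ((-C) * 1\<^sub>m r + x \<cdot>\<^sub>m 1\<^sub>m s * ((1/x) \<cdot>\<^sub>m C)) ((-C) * 0\<^sub>m r s + x \<cdot>\<^sub>m 1\<^sub>m s * 1\<^sub>m s)"
    unfolding M_def F_def by (rule mult_four_block_mat, insert B C, auto)
  also have "\<dots> = four_block_mat ((1/x) \<cdot>\<^sub>m ((x^2) \<cdot>\<^sub>m 1\<^sub>m r - B * C)) (-B) (0\<^sub>m s r) (x \<cdot>\<^sub>m 1\<^sub>m s)"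
  proof -
    have a: "x \<cdot>\<^sub>m 1\<^sub>m s * ((1/x) \<cdot>\<^sub>m C) = C"
      using C x by (subst mult_smult_assoc_mat[of _ s s], auto simp: mult_smult_distrib[of _ s s])
    have b: "(-B) * ((1/x) \<cdot>\<^sub>m C) = - ((1/x) \<cdot>\<^sub>m (B * C))"
      using B C by (auto simp: mult_smult_distrib[of _ r s] mult_minus_distrib_mat)
    show ?thesis unfolding a b
      using B C x by (intro arg_cong4[where f=four_block_mat]; (rule eq_matI)?) (auto simp: power2_eq_square field_simps)
  qed
  finally have e: "M * F = four_block_mat ((1/x) \<cdot>\<^sub>m ((x^2) \<cdot>\<^sub>m 1\<^sub>m r - B * C)) (-B) (0\<^sub>m s r) (x \<cdot>\<^sub>m 1\<^sub>m s)" .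
  have "det F = 1" unfolding F_def
    by (subst det_four_block_mat_upper_right_zero[of _ r _ s], insert C, auto)
  hence "det M = det (M * F)" using det_mult[OF Mc Fc] by simp
  also have "\<dots> = (1/x) ^ r * det ((x^2) \<cdot>\<^sub>m 1\<^sub>m r - B * C) * x ^ s" unfolding e
    by (subst det_four_block_mat_lower_left_zero[of _ r _ s], insert B C, auto)
  finally have d: "det M = (1/x) ^ r * det ((x^2) \<cdot>\<^sub>m 1\<^sub>m r - B * C) * x ^ s" .
  show ?thesis unfolding Meq d using x by (simp add: power_one_over field_simps)
qed



lemma sum_mod_rep:
  fixes f :: "nat \<Rightarrow> real"
  shows "(\<Sum>y<q*m. f (y mod m)) = real q * (\<Sum>j<m. f j)"
proof (induction q)
  case 0 then show ?case by simp
next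
  case (Suc q)
  have "(\<Sum>y<Suc q*m. f (y mod m)) = (\<Sum>y<q*m + m. f (y mod m))" by (simp add: add.commute)
  also have "\<dots> = (\<Sum>y<q*m. f (y mod m)) + (\<Sum>y=q*m..<q*m+m. f (y mod m))"
    unfolding lessThan_atLeast0 by (rule sum.atLeastLessThan_concat[symmetric]) auto
  also have "(\<Sum>y=q*m..<q*m+m. f (y mod m)) = (\<Sum>j<m. f ((j + q*m) mod m))"
    using sum.shift_bounds_nat_ivl[of "\<lambda>y. f (y mod m)" 0 "q*m" m] by (simp add: lessThan_atLeast0 add.commute)
  also have "\<dots> = (\<Sum>j<m. f j)" by (intro sum.cong) auto
  finally show ?case using Suc by (simp add: algebra_simps)
qed

lemma char_poly_eval:
  fixes A :: "real mat"
  assumes A: "A \<in> carrier_mat n n"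
  shows "poly (char_poly A) x = det (x \<cdot>\<^sub>m 1\<^sub>m n - A)"
proof -
  have "- char_matrix A x = x \<cdot>\<^sub>m 1\<^sub>m n - A"
    unfolding char_matrix_def using A by (intro eq_matI) auto
  then show ?thesis using char_poly_matrix[OF A] by simp
qed

lemma poly_eq_nonzero:
  fixes p q :: "real poly"
  assumes "\<And>x. x \<noteq> 0 \<Longrightarrow> poly p x = poly q x"
  shows "p = q"
proof (rule ccontr)
  assume "p \<noteq> q"
  hence "p - q \<noteq> 0" by simp
  hence fin: "finite {x. poly (p - q) x = 0}" by (rule poly_roots_finite)
  have "UNIV - {0} \<subseteq> {x. poly (p - q) x = 0}" using assms by auto
  hence "finite (UNIV - {0::real})" using fin finite_subset by blast
  thus False by (simp add: infinite_UNIV_char_0)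
qed



definition incm :: "nat \<Rightarrow> nat \<Rightarrow> (nat \<Rightarrow> nat \<times> nat) \<Rightarrow> (nat \<Rightarrow> nat \<Rightarrow> real) \<Rightarrow> real mat" where
  "incm n m ends th = mat n m (\<lambda>(i,j). if i \<in> edge_set ends j then th i j else 0)"

lemma lap_eq:
  assumes sg: "signed_graph n m ends sg" and ori: "orientation m ends sg th"
  shows "laplacian n m ends sg = incm n m ends th * (incm n m ends th)\<^sup>T"
proof (rule eq_matI)
  fix u v assume u: "u < dim_row (incm n m ends th * (incm n m ends th)\<^sup>T)"
    and v: "v < dim_col (incm n m ends th * (incm n m ends th)\<^sup>T)"
  hence u: "u < n" and v: "v < n" by (auto simp: incm_def)
  have termj: "(if u \<in> edge_set ends j then th u j else 0) * (if v \<in> edge_set ends j then th v j else 0)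
     = (if u = v \<and> u \<in> edge_set ends j then 1 else 0) - (if edge_set ends j = {u, v} then sg j else 0)"
    if j: "j < m" for j
  proof -
    from sg j have d: "fst (ends j) \<noteq> snd (ends j)" and s: "sg j = 1 \<or> sg j = -1"
      unfolding signed_graph_def by auto
    from ori j have t1: "th (fst (ends j)) j = 1 \<or> th (fst (ends j)) j = -1"
      and t2: "th (snd (ends j)) j = 1 \<or> th (snd (ends j)) j = -1"
      and t3: "th (fst (ends j)) j * th (snd (ends j)) j = - sg j"
      unfolding orientation_def by auto
    show ?thesis
    proof (cases "u = v")
      case True
      have "edge_set ends j \<noteq> {u, v}" using d True unfolding edge_set_def by (auto simp: doubleton_eq_iff)
      moreover have "u \<in> edge_set ends j \<Longrightarrow> th u j * th u j = 1"
        using t1 t2 unfolding edge_set_def by auto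
      ultimately show ?thesis using True by auto
    next
      case False
      have "(u \<in> edge_set ends j \<and> v \<in> edge_set ends j) = (edge_set ends j = {u, v})"
        using False unfolding edge_set_def by auto
      moreover have "u \<in> edge_set ends j \<Longrightarrow> v \<in> edge_set ends j \<Longrightarrow> th u j * th v j = - sg j"
        using False t3 unfolding edge_set_def by (auto simp: mult.commute)
      ultimately show ?thesis using False by auto
    qed
  qed
  have "(incm n m ends th * (incm n m ends th)\<^sup>T) $$ (u, v)
     = (\<Sum>j<m. (if u \<in> edge_set ends j then th u j else 0) * (if v \<in> edge_set ends j then th v j else 0))"
    using u v by (simp add: incm_def scalar_prod_def lessThan_atLeast0)
  also have "\<dots> = (\<Sum>j<m. (if u = v \<and> u \<in> edge_set ends j then 1 else 0)) - (\<Sum>j<m. (if edge_set ends j = {u, v} then sg j else 0))"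
    by (simp add: termj sum_subtractf)
  also have "(\<Sum>j<m. (if u = v \<and> u \<in> edge_set ends j then 1 else 0)) = (if u = v then real (degree m ends u) else 0)"
    by (auto simp: degree_def sum.If_cases Int_def conj_commute)
  finally show "laplacian n m ends sg $$ (u, v) = (incm n m ends th * (incm n m ends th)\<^sup>T) $$ (u, v)"
    using u v by (simp add: laplacian_def adj_matrix_def)
qed (auto simp: laplacian_def adj_matrix_def incm_def)



definition Bm :: "real mat \<Rightarrow> nat \<Rightarrow> nat \<Rightarrow> nat \<Rightarrow> nat \<Rightarrow> real mat" where
  "Bm N n m p k = mat ((p+1)*n) ((k+1)*m) (\<lambda>(a,b). N $$ (a mod n, b mod m))"

lemma Spk_block:
  assumes n: "n > 0"
  shows "Spk_adj n m ends th p k = four_block_mat (0\<^sub>m ((p+1)*n) ((p+1)*n)) (Bm (incm n m ends th) n m p k)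
     (Bm (incm n m ends th) n m p k)\<^sup>T (0\<^sub>m ((k+1)*m) ((k+1)*m))"
proof (rule eq_matI)
  fix a b assume a: "a < dim_row (four_block_mat (0\<^sub>m ((p+1)*n) ((p+1)*n)) (Bm (incm n m ends th) n m p k)
     (Bm (incm n m ends th) n m p k)\<^sup>T (0\<^sub>m ((k+1)*m) ((k+1)*m)))"
    and b: "b < dim_col (four_block_mat (0\<^sub>m ((p+1)*n) ((p+1)*n)) (Bm (incm n m ends th) n m p k)
     (Bm (incm n m ends th) n m p k)\<^sup>T (0\<^sub>m ((k+1)*m) ((k+1)*m)))"
  let ?r = "(p+1)*n" and ?s = "(k+1)*m"
  from a b have a: "a < ?r + ?s" and b: "b < ?r + ?s" by (auto simp: Bm_def)
  have mpos: "m > 0" if "x < ?r + ?s" "\<not> x < ?r" for x using that by (cases m) auto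
  have modm: "(x - ?r) mod m < m" if "x < ?r + ?s" "\<not> x < ?r" for x using mpos[OF that] by simp
  have modn: "x mod n < n" for x using n by simp
  show "Spk_adj n m ends th p k $$ (a, b) = four_block_mat (0\<^sub>m ((p+1)*n) ((p+1)*n)) (Bm (incm n m ends th) n m p k)
     (Bm (incm n m ends th) n m p k)\<^sup>T (0\<^sub>m ((k+1)*m) ((k+1)*m)) $$ (a, b)"
    using a b modm[OF a] modm[OF b] modn[of a] modn[of b]
    by (auto simp: Spk_adj_def Spk_entry_def Bm_def incm_def Let_def)
qed (auto simp: Spk_adj_def Bm_def)

definition Xm :: "nat \<Rightarrow> nat \<Rightarrow> real mat" where
  "Xm n p = mat ((p+1)*n) n (\<lambda>(a,i). if a mod n = i then 1 else 0)"

definition Ym :: "real mat \<Rightarrow> nat \<Rightarrow> nat \<Rightarrow> nat \<Rightarrow> real mat" where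
  "Ym L n p k = mat n ((p+1)*n) (\<lambda>(i,b). real (k+1) * L $$ (i, b mod n))"

lemma BBT_eq:
  assumes N: "N \<in> carrier_mat n m" and n: "n > 0"
  shows "Bm N n m p k * (Bm N n m p k)\<^sup>T = Xm n p * Ym (N * N\<^sup>T) n p k"
proof (rule eq_matI)
  fix a b assume "a < dim_row (Xm n p * Ym (N * N\<^sup>T) n p k)" "b < dim_col (Xm n p * Ym (N * N\<^sup>T) n p k)"
  hence a: "a < (p+1)*n" and b: "b < (p+1)*n" by (auto simp: Xm_def Ym_def)
  have an: "a mod n < n" "b mod n < n" using n by auto
  have "(Bm N n m p k * (Bm N n m p k)\<^sup>T) $$ (a,b) = (\<Sum>y<(k+1)*m. N $$ (a mod n, y mod m) * N $$ (b mod n, y mod m))"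
    using a b by (simp add: Bm_def scalar_prod_def lessThan_atLeast0)
  also have "\<dots> = real (k+1) * (\<Sum>j<m. N $$ (a mod n, j) * N $$ (b mod n, j))"
    by (rule sum_mod_rep)
  also have "\<dots> = real (k+1) * (N * N\<^sup>T) $$ (a mod n, b mod n)"
    using an N by (simp add: scalar_prod_def lessThan_atLeast0)
  also have "\<dots> = (Xm n p * Ym (N * N\<^sup>T) n p k) $$ (a,b)"
    using a b an N by (simp add: Xm_def Ym_def scalar_prod_def if_distrib[of "\<lambda>x. x * _"] cong: if_cong)
  finally show "(Bm N n m p k * (Bm N n m p k)\<^sup>T) $$ (a,b) = (Xm n p * Ym (N * N\<^sup>T) n p k) $$ (a,b)" .
qed (auto simp: Bm_def Xm_def Ym_def)

lemma YX_eq: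
  assumes L: "L \<in> carrier_mat n n" and n: "n > 0"
  shows "Ym L n p k * Xm n p = (real ((p+1)*(k+1))) \<cdot>\<^sub>m L"
proof (rule eq_matI)
  fix i i' assume "i < dim_row ((real ((p+1)*(k+1))) \<cdot>\<^sub>m L)" "i' < dim_col ((real ((p+1)*(k+1))) \<cdot>\<^sub>m L)"
  hence i: "i < n" and i': "i' < n" using L by auto
  have "(Ym L n p k * Xm n p) $$ (i,i') = (\<Sum>a<(p+1)*n. (\<lambda>t. real (k+1) * L $$ (i, t) * (if t = i' then 1 else 0)) (a mod n))"
    using i i' by (simp add: Xm_def Ym_def scalar_prod_def lessThan_atLeast0)
  also have "\<dots> = real (p+1) * (\<Sum>t<n. real (k+1) * L $$ (i, t) * (if t = i' then 1 else 0))"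
    by (rule sum_mod_rep)
  also have "(\<Sum>t<n. real (k+1) * L $$ (i, t) * (if t = i' then 1 else 0)) = real (k+1) * L $$ (i, i')"
    using i' by (simp add: if_distrib[of "\<lambda>x. _ * x"] cong: if_cong)
  also have "real (p+1) * (real (k+1) * L $$ (i, i')) = ((real ((p+1)*(k+1))) \<cdot>\<^sub>m L) $$ (i,i')"
    using i i' L by (simp add: algebra_simps)
  finally show "(Ym L n p k * Xm n p) $$ (i,i') = ((real ((p+1)*(k+1))) \<cdot>\<^sub>m L) $$ (i,i')" .
qed (use L in \<open>auto simp: Xm_def Ym_def\<close>)



lemma prod_mset_list: "(\<Prod>a\<in>#mset xs. f a) = (\<Prod>i<length xs. f (xs ! i))"
proof (induction xs)
  case (Cons a xs)
  have "(\<Prod>i<length (a#xs). f ((a#xs) ! i)) = f a * (\<Prod>i<length xs. f (xs ! i))"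
    by (simp only: length_Cons prod.lessThan_Suc_shift) simp
  then show ?case using Cons by simp
qed simp

lemma prod_mset_upt: "(\<Prod>a\<in>#mset (map g [0..<q]). f a) = (\<Prod>i<q. f (g i))"
  by (induction q) (auto simp: mult.commute)

lemma poly_char_list:
  "poly (\<Prod>a\<in>#mset mu. [:- a, 1:]) (z::real) = (\<Prod>i<length mu. (z - mu ! i))"
  by (simp add: poly_prod_mset prod_mset_list poly_prod)

lemma main_eval:
  fixes N :: "real mat" and mu :: "real list"
  assumes N: "N \<in> carrier_mat n m" and n: "n > 0"
    and ch: "char_poly (N * N\<^sup>T) = (\<Prod>a\<in>#mset mu. [:- a, 1:])" and len: "length mu = n"
    and p: "p \<ge> 1" and x: "x \<noteq> 0"
  shows "poly (char_poly (four_block_mat (0\<^sub>m ((p+1)*n) ((p+1)*n)) (Bm N n m p k)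
     (Bm N n m p k)\<^sup>T (0\<^sub>m ((k+1)*m) ((k+1)*m))))  x
   = x ^ ((p+1)*n + (k+1)*m - 2*n) * (\<Prod>i<n. (x^2 - real ((p+1)*(k+1)) * mu ! i))"
proof -
  define r where "r = (p+1)*n"
  define s where "s = (k+1)*m"
  define c where "c = real ((p+1)*(k+1))"
  define y where "y = x^2"
  define B where "B = Bm N n m p k"
  define L where "L = N * N\<^sup>T"
  have Lc: "L \<in> carrier_mat n n" using N by (simp add: L_def)
  have Bc: "B \<in> carrier_mat r s" by (simp add: B_def Bm_def r_def s_def)
  have Xc: "Xm n p \<in> carrier_mat r n" by (simp add: Xm_def r_def)
  have Yc: "Ym L n p k \<in> carrier_mat n r" by (simp add: Ym_def r_def)
  have y0: "y \<noteq> 0" using x by (simp add: y_def)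
  have c0: "c > 0" unfolding c_def by (rule of_nat_0_less_iff[THEN iffD2]) simp
  define D where "D = poly (char_poly (four_block_mat (0\<^sub>m r r) B B\<^sup>T (0\<^sub>m s s))) x"
  have Dd: "D = det (x \<cdot>\<^sub>m 1\<^sub>m (r+s) - four_block_mat (0\<^sub>m r r) B B\<^sup>T (0\<^sub>m s s))"
    unfolding D_def by (rule char_poly_eval) (use Bc in auto)
  have e1: "x ^ r * D = x ^ s * det (y \<cdot>\<^sub>m 1\<^sub>m r - B * B\<^sup>T)"
    unfolding Dd y_def by (rule S1[OF Bc _ x]) (use Bc in auto)
  have BB: "B * B\<^sup>T = Xm n p * Ym L n p k" unfolding B_def L_def by (rule BBT_eq[OF N n])
  have e2: "y ^ n * det (y \<cdot>\<^sub>m 1\<^sub>m r - Xm n p * Ym L n p k) = y ^ r * det (y \<cdot>\<^sub>m 1\<^sub>m n - Ym L n p k * Xm n p)"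
    by (rule S2[OF Xc Yc y0])
  have YX: "Ym L n p k * Xm n p = c \<cdot>\<^sub>m L" unfolding c_def by (rule YX_eq[OF Lc n])
  have "y \<cdot>\<^sub>m 1\<^sub>m n - c \<cdot>\<^sub>m L = c \<cdot>\<^sub>m ((y / c) \<cdot>\<^sub>m 1\<^sub>m n - L)"
    using Lc c0 by (intro eq_matI) (auto simp: field_simps)
  hence "det (y \<cdot>\<^sub>m 1\<^sub>m n - c \<cdot>\<^sub>m L) = c ^ n * det ((y / c) \<cdot>\<^sub>m 1\<^sub>m n - L)"
    using Lc by simp
  also have "det ((y / c) \<cdot>\<^sub>m 1\<^sub>m n - L) = poly (char_poly L) (y / c)"
    by (rule char_poly_eval[symmetric, OF Lc])
  also have "\<dots> = (\<Prod>i<n. (y / c - mu ! i))" unfolding L_def ch poly_char_list len ..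
  also have "c ^ n * \<dots> = (\<Prod>i<n. c * (y / c - mu ! i))" by (simp add: prod.distrib)
  also have "\<dots> = (\<Prod>i<n. (y - c * mu ! i))" using c0 by (intro prod.cong) (auto simp: field_simps)
  finally have e3: "det (y \<cdot>\<^sub>m 1\<^sub>m n - c \<cdot>\<^sub>m L) = (\<Prod>i<n. (y - c * mu ! i))" .
  define P where "P = (\<Prod>i<n. (y - c * mu ! i))"
  have "x ^ r * y ^ n * D = x ^ s * y ^ r * P"
    using e1 e2 e3 BB YX unfolding P_def by (metis mult.assoc mult.commute)
  hence eq: "x ^ (r + 2*n) * D = x ^ (r + 2*n) * (x ^ (r+s-2*n) * P)"
  proof -
    assume h: "x ^ r * y ^ n * D = x ^ s * y ^ r * P"
    have rn: "r \<ge> 2*n" using p by (simp add: r_def)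
    have "x ^ (r + 2*n) * D = x ^ r * y ^ n * D" by (simp add: y_def power_add power_mult)
    also have "\<dots> = x ^ s * y ^ r * P" by (rule h)
    also have "\<dots> = x ^ (r + 2*n) * (x ^ (r+s-2*n) * P)"
    proof -
      have "s + 2*r = (r + 2*n) + (r+s-2*n)" using rn by simp
      hence "x ^ (s + 2*r) = x ^ (r + 2*n) * x ^ (r+s-2*n)" by (metis power_add)
      thus ?thesis by (simp add: y_def power_add power_mult[symmetric] mult.assoc mult_2_right)
    qed
    finally show ?thesis .
  qed
  hence "D = x ^ (r+s-2*n) * P" using x by simp
  thus ?thesis unfolding D_def P_def r_def s_def B_def c_def y_def .
qed



lemma self_sp_nonneg: fixes w :: "real vec" shows "w \<bullet> w \<ge> 0"
  unfolding scalar_prod_def by (rule sum_nonneg) auto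

lemma self_sp_pos: fixes v :: "real vec"
  assumes v: "v \<in> carrier_vec n" "v \<noteq> 0\<^sub>v n" shows "v \<bullet> v > 0"
proof -
  have "v \<bullet> v \<noteq> 0"
  proof
    assume "v \<bullet> v = 0"
    hence "(\<Sum>i\<in>{0..<n}. v $ i * v $ i) = 0" using v by (simp add: scalar_prod_def)
    hence "\<forall>i\<in>{0..<n}. v $ i * v $ i = 0" by (subst (asm) sum_nonneg_eq_0_iff) auto
    hence "v = 0\<^sub>v n" using v by (intro eq_vecI) auto
    with v show False by simp
  qed
  thus ?thesis using self_sp_nonneg[of v] by simp
qed

lemma mu_nonneg:
  fixes N :: "real mat"
  assumes N: "N \<in> carrier_mat n m" and ch: "char_poly (N * N\<^sup>T) = (\<Prod>a\<in>#mset mu. [:- a, 1:])"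
    and i: "i < length mu"
  shows "mu ! i \<ge> 0"
proof -
  define L where "L = N * N\<^sup>T"
  have Lc: "L \<in> carrier_mat n n" using N by (simp add: L_def)
  have "poly (char_poly L) (mu ! i) = 0"
    unfolding L_def ch poly_char_list using i by (intro prod_zero) auto
  hence "eigenvalue L (mu ! i)" using eigenvalue_root_char_poly[OF Lc] by simp
  then obtain v where v: "v \<in> carrier_vec n" "v \<noteq> 0\<^sub>v n" "L *\<^sub>v v = (mu ! i) \<cdot>\<^sub>v v"
    unfolding eigenvalue_def eigenvector_def using Lc by auto
  define w where "w = N\<^sup>T *\<^sub>v v"
  have wc: "w \<in> carrier_vec m" using N v by (simp add: w_def)
  have "v \<bullet> (L *\<^sub>v v) = v \<bullet> (N *\<^sub>v w)"
    unfolding L_def w_def using N v by (subst assoc_mult_mat_vec[of _ n m _ n]) auto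
  also have "\<dots> = w \<bullet> w" unfolding w_def
    by (rule transpose_vec_mult_scalar[symmetric, OF N _ v(1)]) (use wc w_def in auto)
  finally have "v \<bullet> (L *\<^sub>v v) \<ge> 0" using self_sp_nonneg[of w] by simp
  moreover have "v \<bullet> (L *\<^sub>v v) = (mu ! i) * (v \<bullet> v)" using v by simp
  moreover have "v \<bullet> v > 0" by (rule self_sp_pos[OF v(1,2)])
  ultimately show ?thesis by (simp add: zero_le_mult_iff)
qed



lemma zero_root:
  assumes sg: "signed_graph n m ends sg" and ori: "orientation m ends sg th"
    and xs1: "\<forall>v<n. xs v = 1 \<or> xs v = -1"
    and xs2: "\<forall>j<m. xs (fst (ends j)) * xs (snd (ends j)) = sg j"
    and n: "n > 0"
    and ch: "char_poly (incm n m ends th * (incm n m ends th)\<^sup>T) = (\<Prod>a\<in>#mset mu. [:- a, 1:])"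
    and len: "length mu = n"
  shows "\<exists>i<n. mu ! i = 0"
proof -
  define N where "N = incm n m ends th"
  have N: "N \<in> carrier_mat n m" by (simp add: N_def incm_def)
  define L where "L = N * N\<^sup>T"
  have Lc: "L \<in> carrier_mat n n" using N by (simp add: L_def)
  define v where "v = vec n xs"
  have vc: "v \<in> carrier_vec n" by (simp add: v_def)
  have v0: "v \<noteq> 0\<^sub>v n"
  proof
    assume "v = 0\<^sub>v n"
    hence "v $ 0 = 0" using n by simp
    thus False using xs1 n by (auto simp: v_def)
  qed
  have Nv: "N\<^sup>T *\<^sub>v v = 0\<^sub>v m"
  proof (rule eq_vecI)
    fix j assume "j < dim_vec (0\<^sub>v m :: real vec)"
    hence j: "j < m" by simp
    define a where "a = fst (ends j)"
    define b where "b = snd (ends j)"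
    from sg j have ab: "a < n" "b < n" "a \<noteq> b" and s: "sg j = 1 \<or> sg j = -1"
      unfolding signed_graph_def a_def b_def by auto
    from ori j have t: "th a j = 1 \<or> th a j = -1" "th b j = 1 \<or> th b j = -1" "th a j * th b j = - sg j"
      unfolding orientation_def a_def b_def by auto
    have x: "xs a = 1 \<or> xs a = -1" "xs b = 1 \<or> xs b = -1" "xs a * xs b = sg j"
      using xs1 xs2 ab j unfolding a_def b_def by auto
    have "(N\<^sup>T *\<^sub>v v) $ j = (\<Sum>i\<in>{0..<n}. (if i \<in> {a, b} then th i j * xs i else 0))"
      using j N by (auto simp: N_def incm_def v_def scalar_prod_def edge_set_def a_def b_def intro!: sum.cong)
    also have "\<dots> = (\<Sum>i\<in>{a,b}. th i j * xs i)"
      using ab by (subst sum.inter_restrict[symmetric]) (auto intro: sum.cong)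
    also have "\<dots> = th a j * xs a + th b j * xs b" using ab by simp
    also have "\<dots> = 0" using t x s by auto
    finally show "(N\<^sup>T *\<^sub>v v) $ j = 0\<^sub>v m $ j" using j by simp
  qed (use N in simp)
  have "L *\<^sub>v v = N *\<^sub>v (N\<^sup>T *\<^sub>v v)"
    unfolding L_def using N vc by (subst assoc_mult_mat_vec[of _ n m _ n]) auto
  also have "\<dots> = 0\<^sub>v n" unfolding Nv using N by (intro eq_vecI) (auto simp: scalar_prod_def)
  also have "\<dots> = 0 \<cdot>\<^sub>v v" using vc by auto
  finally have "eigenvalue L 0" unfolding eigenvalue_def eigenvector_def using Lc vc v0 by auto
  hence "poly (char_poly L) 0 = 0" using eigenvalue_root_char_poly[OF Lc] by simp
  hence "(\<Prod>i<n. (0 - mu ! i)) = 0" unfolding L_def N_def ch poly_char_list len .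
  thus ?thesis by auto
qed



definition wlk :: "nat \<Rightarrow> (nat \<Rightarrow> nat \<times> nat) \<Rightarrow> (nat \<Rightarrow> nat) \<Rightarrow> (nat \<Rightarrow> nat) \<Rightarrow> nat \<Rightarrow> bool" where
  "wlk m ends f g l \<longleftrightarrow> (\<forall>t<l. g t < m \<and> edge_set ends (g t) = {f t, f (Suc t)})"

lemma prod_pm1:
  fixes sg :: "nat \<Rightarrow> real"
  assumes "finite S" "\<forall>j\<in>S. sg j = 1 \<or> sg j = -1"
  shows "(\<Prod>j\<in>S. sg j) = (-1) ^ card {j\<in>S. sg j = -1}"
  using assms
proof (induction S rule: finite_induct)
  case (insert x F)
  have fin: "finite {j\<in>F. sg j = -1}" using insert by simp
  show ?case
  proof (cases "sg x = -1")
    case True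
    have "{j\<in>insert x F. sg j = -1} = insert x {j\<in>F. sg j = -1}" using True by auto
    moreover have "x \<notin> {j\<in>F. sg j = -1}" using insert by auto
    ultimately show ?thesis using insert True fin by simp
  next
    case False
    hence "sg x = 1" using insert by auto
    moreover have "{j\<in>insert x F. sg j = -1} = {j\<in>F. sg j = -1}" using False by auto
    ultimately show ?thesis using insert by simp
  qed
qed simp

lemma closed_walk_one:
  assumes sgr: "signed_graph n m ends sg" and bal: "balanced n m ends sg"
  shows "wlk m ends f g l \<Longrightarrow> f 0 = f l \<Longrightarrow> (\<Prod>t<l. sg (g t)) = 1"
proof (induction l arbitrary: f g rule: less_induct)
  case (less l)
  note w = less.prems(1) and cl = less.prems(2)
  have ends_ok: "fst (ends j) < n \<and> snd (ends j) < n \<and> fst (ends j) \<noteq> snd (ends j) \<and> (sg j = 1 \<or> sg j = -1)"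
    if "j < m" for j using sgr that unfolding signed_graph_def by auto
  have inj_e: "edge_set ends j = edge_set ends j' \<Longrightarrow> j = j'" if "j < m" "j' < m" for j j'
    using sgr that unfolding signed_graph_def by auto
  show ?case
  proof (cases "\<exists>i j. i < j \<and> j \<le> l \<and> \<not> (i = 0 \<and> j = l) \<and> f i = f j")
    case True
    then obtain i j where ij: "i < j" "j \<le> l" "\<not> (i = 0 \<and> j = l)" "f i = f j" by blast
    define d where "d = j - i"
    have d: "d > 0" "i + d = j" using ij by (auto simp: d_def)
    define l2 where "l2 = l - d"
    have l2: "l2 + d = l" "l2 \<ge> i" using ij by (auto simp: l2_def d_def)
    have w1: "wlk m ends (\<lambda>t. f (i + t)) (\<lambda>t. g (i + t)) d"
      using w d l2 unfolding wlk_def by (auto simp: add.commute)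
    have lt1: "d < l" using ij by (auto simp: d_def)
    have p1: "(\<Prod>t<d. sg (g (i + t))) = 1"
      by (rule less.IH[OF lt1 w1]) (use ij d in simp)
    define f2 where "f2 t = (if t \<le> i then f t else f (t + d))" for t
    define g2 where "g2 t = (if t < i then g t else g (t + d))" for t
    have w2: "wlk m ends f2 g2 l2"
      unfolding wlk_def
    proof (intro allI impI)
      fix t assume t: "t < l2"
      show "g2 t < m \<and> edge_set ends (g2 t) = {f2 t, f2 (Suc t)}"
      proof (cases "t < i")
        case True
        then show ?thesis using w t l2 unfolding wlk_def f2_def g2_def by auto
      next
        case False
        have "t + d < l" using t l2 by simp
        hence "g (t + d) < m \<and> edge_set ends (g (t + d)) = {f (t + d), f (Suc (t + d))}"
          using w unfolding wlk_def by auto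
        moreover have "f2 t = f (t + d)" using False ij d unfolding f2_def by auto
        moreover have "f2 (Suc t) = f (Suc (t + d))" using False unfolding f2_def by auto
        ultimately show ?thesis using False unfolding g2_def by auto
      qed
    qed
    have lt2: "l2 < l" using l2 d by simp
    have cl2: "f2 0 = f2 l2"
    proof (cases "l2 \<le> i")
      case True
      hence "l2 = i" "j = l" using l2 ij d by auto
      thus ?thesis using cl ij unfolding f2_def by auto
    next
      case False
      thus ?thesis using cl l2 unfolding f2_def by auto
    qed
    have p2: "(\<Prod>t<l2. sg (g2 t)) = 1" by (rule less.IH[OF lt2 w2 cl2])
    have split3: "(\<Prod>t<l. sg (g t)) = (\<Prod>t\<in>{0..<i}. sg (g t)) * (\<Prod>t\<in>{i..<j}. sg (g t)) * (\<Prod>t\<in>{j..<l}. sg (g t))"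
      unfolding lessThan_atLeast0 using ij
      by (simp add: prod.atLeastLessThan_concat)
    have A: "(\<Prod>t\<in>{i..<j}. sg (g t)) = (\<Prod>t<d. sg (g (i + t)))"
      using prod.shift_bounds_nat_ivl[of "\<lambda>t. sg (g t)" 0 i d] d
      by (simp add: lessThan_atLeast0 add.commute)
    have B: "(\<Prod>t<l2. sg (g2 t)) = (\<Prod>t\<in>{0..<i}. sg (g t)) * (\<Prod>t\<in>{j..<l}. sg (g t))"
    proof -
      have "(\<Prod>t<l2. sg (g2 t)) = (\<Prod>t\<in>{0..<i}. sg (g2 t)) * (\<Prod>t\<in>{i..<l2}. sg (g2 t))"
        unfolding lessThan_atLeast0 using l2 by (simp add: prod.atLeastLessThan_concat)
      also have "(\<Prod>t\<in>{0..<i}. sg (g2 t)) = (\<Prod>t\<in>{0..<i}. sg (g t))"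
        by (rule prod.cong) (auto simp: g2_def)
      also have "(\<Prod>t\<in>{i..<l2}. sg (g2 t)) = (\<Prod>t\<in>{i..<l2}. sg (g (t + d)))"
        by (rule prod.cong) (auto simp: g2_def)
      also have "\<dots> = (\<Prod>t\<in>{i+d..<l2+d}. sg (g t))"
        by (rule prod.shift_bounds_nat_ivl[symmetric])
      also have "\<dots> = (\<Prod>t\<in>{j..<l}. sg (g t))" using d l2 by simp
      finally show ?thesis .
    qed
    show ?thesis using split3 A B p1 p2 by (simp add: mult_ac)
  next
    case False
    hence nd: "\<And>i j. i < j \<Longrightarrow> j \<le> l \<Longrightarrow> f i = f j \<Longrightarrow> i = 0 \<and> j = l" by blast
    have wt: "g t < m" "edge_set ends (g t) = {f t, f (Suc t)}" if "t < l" for t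
      using w that unfolding wlk_def by auto
    consider "l = 0" | "l = 1" | "l = 2" | "l \<ge> 3" by linarith
    then show ?thesis
    proof cases
      case 1 then show ?thesis by simp
    next
      case 2
      have "edge_set ends (g 0) = {f 0}" using wt[of 0] cl 2 by simp
      moreover have "fst (ends (g 0)) \<noteq> snd (ends (g 0))" using ends_ok[OF wt(1)[of 0]] 2 by simp
      ultimately show ?thesis unfolding edge_set_def by auto
    next
      case 3
      have "edge_set ends (g 0) = edge_set ends (g 1)" using wt[of 0] wt[of 1] cl 3
        by (auto simp: numeral_2_eq_2 insert_commute)
      hence "g 0 = g 1" using inj_e wt(1)[of 0] wt(1)[of 1] 3 by simp
      moreover have "sg (g 0) = 1 \<or> sg (g 0) = -1" using ends_ok[OF wt(1)[of 0]] 3 by simp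
      ultimately show ?thesis using 3 by (auto simp: numeral_2_eq_2)
    next
      case 4
      define vs where "vs = map f [0..<l]"
      define es where "es = map g [0..<l]"
      have injf: "inj_on f {0..<l}"
        unfolding inj_on_def
      proof (intro ballI impI)
        fix a b assume ab: "a \<in> {0..<l}" "b \<in> {0..<l}" "f a = f b"
        show "a = b"
        proof (rule ccontr)
          assume "a \<noteq> b"
          hence "a < b \<or> b < a" by auto
          thus False using nd ab by (metis atLeastLessThan_iff less_imp_le not_less_iff_gr_or_eq)
        qed
      qed
      have injg: "inj_on g {0..<l}"
        unfolding inj_on_def
      proof (intro ballI impI)
        have key: "False" if ab: "a < b" "b < l" "g a = g b" for a b
        proof -
          have "{f a, f (Suc a)} = {f b, f (Suc b)}" using wt(2)[of a] wt(2)[of b] ab by auto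
          moreover have "f a \<noteq> f b" using inj_on_eq_iff[OF injf, of a b] ab by auto
          ultimately have e: "f a = f (Suc b)" "f (Suc a) = f b" by (auto simp: doubleton_eq_iff)
          show False
          proof (cases "Suc b < l")
            case True
            then show ?thesis using injf e ab unfolding inj_on_def by fastforce
          next
            case False
            hence "Suc b = l" using ab by simp
            hence "f a = f 0" using e cl by simp
            hence "a = 0" using injf ab unfolding inj_on_def by fastforce
            hence "f 1 = f b" using e by simp
            moreover have "1 < b" using \<open>Suc b = l\<close> 4 by simp
            ultimately show False using injf ab unfolding inj_on_def by fastforce
          qed
        qed
        fix a b assume ab: "a \<in> {0..<l}" "b \<in> {0..<l}" "g a = g b"
        show "a = b"
        proof (rule ccontr)
          assume "a \<noteq> b"
          hence "a < b \<or> b < a" by auto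
          thus False using key[of a b] key[of b a] ab by auto
        qed
      qed
      have cyc: "is_cycle n m ends vs es"
        unfolding is_cycle_def
      proof (intro conjI)
        show "3 \<le> length vs" using 4 by (simp add: vs_def)
        show "length es = length vs" by (simp add: vs_def es_def)
        show "distinct vs" using injf by (simp add: vs_def distinct_map)
        show "distinct es" using injg by (simp add: es_def distinct_map)
        show "set vs \<subseteq> {..<n}"
        proof
          fix v assume "v \<in> set vs"
          then obtain t where t: "t < l" "v = f t" by (auto simp: vs_def)
          hence "v \<in> edge_set ends (g t)" using wt(2)[of t] by simp
          thus "v \<in> {..<n}" using ends_ok[OF wt(1)[OF t(1)]] unfolding edge_set_def by auto
        qed
        show "set es \<subseteq> {..<m}" using wt(1) by (auto simp: es_def)
        show "\<forall>i<length vs. edge_set ends (es ! i) = {vs ! i, vs ! ((i + 1) mod length vs)}"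
        proof (intro allI impI)
          fix i assume i: "i < length vs"
          hence i: "i < l" by (simp add: vs_def)
          show "edge_set ends (es ! i) = {vs ! i, vs ! ((i + 1) mod length vs)}"
          proof (cases "Suc i < l")
            case True
            then show ?thesis using wt(2)[OF i] i by (simp add: vs_def es_def)
          next
            case False
            hence "Suc i = l" using i by simp
            then show ?thesis using wt(2)[OF i] i cl 4 by (simp add: vs_def es_def)
          qed
        qed
      qed
      hence ev: "even (card {j \<in> set es. sg j = -1})" using bal unfolding balanced_def by blast
      have "(\<Prod>t<l. sg (g t)) = (\<Prod>j\<in>g ` {0..<l}. sg j)"
        using prod.reindex[OF injg, of sg] by (simp add: lessThan_atLeast0)
      also have "g ` {0..<l} = set es" by (simp add: es_def)
      also have "(\<Prod>j\<in>set es. sg j) = (-1) ^ card {j \<in> set es. sg j = -1}"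
        by (rule prod_pm1) (use ends_ok wt(1) in \<open>auto simp: es_def\<close>)
      also have "\<dots> = 1" using ev by simp
      finally show ?thesis .
    qed
  qed
qed



lemma walk_exists:
  assumes con: "connected_graph n m ends" and v: "v < n"
  shows "\<exists>f g l. wlk m ends f g l \<and> f 0 = 0 \<and> f l = v"
proof -
  have "(adjacent m ends)\<^sup>*\<^sup>* 0 v" using con v unfolding connected_graph_def by auto
  thus ?thesis
  proof (induction rule: rtranclp_induct)
    case base
    have "wlk m ends (\<lambda>_. 0) (\<lambda>_. 0) 0" by (simp add: wlk_def)
    thus ?case by blast
  next
    case (step w u)
    then obtain f g l where W: "wlk m ends f g l" "f 0 = 0" "f l = w" by blast
    from step(2) obtain j where j: "j < m" "edge_set ends j = {w, u}" unfolding adjacent_def by blast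
    have "wlk m ends (f(Suc l := u)) (g(l := j)) (Suc l)"
      unfolding wlk_def
    proof (intro allI impI)
      fix t assume t: "t < Suc l"
      show "(g(l := j)) t < m \<and> edge_set ends ((g(l := j)) t) = {(f(Suc l := u)) t, (f(Suc l := u)) (Suc t)}"
      proof (cases "t = l")
        case True then show ?thesis using j W by simp
      next
        case False then show ?thesis using W t unfolding wlk_def by auto
      qed
    qed
    moreover have "(f(Suc l := u)) 0 = 0" "(f(Suc l := u)) (Suc l) = u" using W by auto
    ultimately show ?case by blast
  qed
qed

lemma walk_prod_unique:
  assumes sgr: "signed_graph n m ends sg" and bal: "balanced n m ends sg"
    and W1: "wlk m ends f1 g1 l1" "f1 0 = 0" "f1 l1 = v"
    and W2: "wlk m ends f2 g2 l2" "f2 0 = 0" "f2 l2 = v"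
  shows "(\<Prod>t<l1. sg (g1 t)) = (\<Prod>t<l2. sg (g2 t))"
proof -
  define L where "L = l1 + l2"
  define f where "f t = (if t \<le> l1 then f1 t else f2 (L - t))" for t
  define g where "g t = (if t < l1 then g1 t else g2 (L - Suc t))" for t
  have w: "wlk m ends f g L"
    unfolding wlk_def
  proof (intro allI impI)
    fix t assume t: "t < L"
    show "g t < m \<and> edge_set ends (g t) = {f t, f (Suc t)}"
    proof (cases "t < l1")
      case True
      then show ?thesis using W1 unfolding wlk_def f_def g_def by auto
    next
      case False
      define u where "u = L - Suc t"
      have u: "u < l2" "Suc u = L - t" using t False by (auto simp: u_def L_def)
      have e: "g2 u < m" "edge_set ends (g2 u) = {f2 u, f2 (Suc u)}" using W2 u unfolding wlk_def by auto
      have "f t = f2 (Suc u)"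
      proof (cases "t = l1")
        case True then show ?thesis using u W1 W2 by (simp add: f_def L_def)
      next
        case False' : False
        then show ?thesis using u False by (simp add: f_def)
      qed
      moreover have "f (Suc t) = f2 u" using False by (simp add: f_def u_def)
      moreover have "g t = g2 u" using False by (simp add: g_def u_def)
      ultimately show ?thesis using e by (auto simp: insert_commute)
    qed
  qed
  have cl: "f 0 = f L"
  proof (cases "l2 = 0")
    case True then show ?thesis using W1 W2 by (simp add: f_def L_def)
  next
    case False then show ?thesis using W1 W2 by (simp add: f_def L_def)
  qed
  have one: "(\<Prod>t<L. sg (g t)) = 1" by (rule closed_walk_one[OF sgr bal w cl])
  have "(\<Prod>t<L. sg (g t)) = (\<Prod>t\<in>{0..<l1}. sg (g t)) * (\<Prod>t\<in>{l1..<L}. sg (g t))"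
    unfolding lessThan_atLeast0 L_def by (simp add: prod.atLeastLessThan_concat)
  also have "(\<Prod>t\<in>{0..<l1}. sg (g t)) = (\<Prod>t<l1. sg (g1 t))"
    unfolding lessThan_atLeast0 by (rule prod.cong) (auto simp: g_def)
  also have "(\<Prod>t\<in>{l1..<L}. sg (g t)) = (\<Prod>u\<in>{0..<l2}. sg (g (u + l1)))"
    using prod.shift_bounds_nat_ivl[of "\<lambda>t. sg (g t)" 0 l1 l2] by (simp add: L_def add.commute)
  also have "\<dots> = (\<Prod>u<l2. sg (g2 (l2 - Suc u)))"
    unfolding lessThan_atLeast0 by (rule prod.cong) (auto simp: g_def L_def)
  also have "\<dots> = (\<Prod>u<l2. sg (g2 u))" by (rule prod.nat_diff_reindex)
  finally have eq: "(\<Prod>t<l1. sg (g1 t)) * (\<Prod>u<l2. sg (g2 u)) = 1" using one by simp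
  have sq: "(\<Prod>u<l2. sg (g2 u)) ^ 2 = 1"
  proof -
    have "(\<Prod>u<l2. sg (g2 u)) ^ 2 = (\<Prod>u<l2. (sg (g2 u)) ^ 2)" by (simp add: prod_power_distrib)
    also have "\<dots> = 1"
    proof (rule prod.neutral, intro ballI)
      fix u assume "u \<in> {..<l2}"
      hence "g2 u < m" using W2 unfolding wlk_def by auto
      hence "sg (g2 u) = 1 \<or> sg (g2 u) = -1" using sgr unfolding signed_graph_def by auto
      thus "sg (g2 u) ^ 2 = 1" by auto
    qed
    finally show ?thesis .
  qed
  have "(\<Prod>t<l1. sg (g1 t)) = (\<Prod>t<l1. sg (g1 t)) * (\<Prod>u<l2. sg (g2 u)) ^ 2" using sq by simp
  also have "\<dots> = (\<Prod>u<l2. sg (g2 u))" using eq by (simp add: power2_eq_square mult.assoc[symmetric])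
  finally show ?thesis .
qed

lemma switching:
  assumes sgr: "signed_graph n m ends sg" and con: "connected_graph n m ends" and bal: "balanced n m ends sg"
  shows "\<exists>xs. (\<forall>v<n. xs v = 1 \<or> xs v = -1) \<and> (\<forall>j<m. xs (fst (ends j)) * xs (snd (ends j)) = sg j)"
proof -
  define xs where "xs v = (SOME s. \<exists>f g l. wlk m ends f g l \<and> f 0 = 0 \<and> f l = v \<and> s = (\<Prod>t<l. sg (g t)))" for v
  have xs_eq: "xs v = (\<Prod>t<l. sg (g t))" if W: "wlk m ends f g l" "f 0 = 0" "f l = v" for v f g l
  proof -
    have "\<exists>s. \<exists>f g l. wlk m ends f g l \<and> f 0 = 0 \<and> f l = v \<and> s = (\<Prod>t<l. sg (g t))" using W by blast
    hence "\<exists>f' g' l'. wlk m ends f' g' l' \<and> f' 0 = 0 \<and> f' l' = v \<and> xs v = (\<Prod>t<l'. sg (g' t))"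
      unfolding xs_def by (rule someI_ex)
    then obtain f' g' l' where W': "wlk m ends f' g' l'" "f' 0 = 0" "f' l' = v" "xs v = (\<Prod>t<l'. sg (g' t))" by blast
    show ?thesis using walk_prod_unique[OF sgr bal W W'(1-3)] W'(4) by simp
  qed
  have pm: "(\<Prod>t<l. sg (g t)) = 1 \<or> (\<Prod>t<l. sg (g t)) = -1" if W: "wlk m ends f g l" for f g l
  proof -
    have "(\<Prod>t<l. sg (g t)) ^ 2 = (\<Prod>t<l. (sg (g t)) ^ 2)" by (simp add: prod_power_distrib)
    also have "\<dots> = 1"
    proof (rule prod.neutral, intro ballI)
      fix u assume "u \<in> {..<l}"
      hence "g u < m" using W unfolding wlk_def by auto
      hence "sg (g u) = 1 \<or> sg (g u) = -1" using sgr unfolding signed_graph_def by auto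
      thus "sg (g u) ^ 2 = 1" by auto
    qed
    finally show ?thesis by (simp add: power2_eq_1_iff)
  qed
  have A: "\<forall>v<n. xs v = 1 \<or> xs v = -1"
  proof (intro allI impI)
    fix v assume "v < n"
    then obtain f g l where W: "wlk m ends f g l" "f 0 = 0" "f l = v" using walk_exists[OF con] by blast
    show "xs v = 1 \<or> xs v = -1" using xs_eq[OF W] pm[OF W(1)] by simp
  qed
  have B: "\<forall>j<m. xs (fst (ends j)) * xs (snd (ends j)) = sg j"
  proof (intro allI impI)
    fix j assume j: "j < m"
    define a where "a = fst (ends j)"
    define b where "b = snd (ends j)"
    have ab: "a < n" "b < n" using sgr j unfolding signed_graph_def a_def b_def by auto
    obtain f g l where W: "wlk m ends f g l" "f 0 = 0" "f l = a" using walk_exists[OF con ab(1)] by blast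
    have W2: "wlk m ends (f(Suc l := b)) (g(l := j)) (Suc l)"
      unfolding wlk_def
    proof (intro allI impI)
      fix t assume t: "t < Suc l"
      show "(g(l := j)) t < m \<and> edge_set ends ((g(l := j)) t) = {(f(Suc l := b)) t, (f(Suc l := b)) (Suc t)}"
      proof (cases "t = l")
        case True then show ?thesis using j W by (simp add: edge_set_def a_def b_def)
      next
        case False then show ?thesis using W t unfolding wlk_def by auto
      qed
    qed
    have "xs b = (\<Prod>t<Suc l. sg ((g(l := j)) t))" by (rule xs_eq[OF W2]) (use W in auto)
    also have "\<dots> = (\<Prod>t<l. sg (g t)) * sg j" by (simp add: prod.lessThan_Suc)
    also have "(\<Prod>t<l. sg (g t)) = xs a" using xs_eq[OF W] by simp
    finally have "xs b = xs a * sg j" .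
    moreover have "xs a * xs a = 1" using A ab by auto
    ultimately show "xs a * xs b = sg j" by (metis mult.assoc mult_1)
  qed
  show ?thesis using A B by blast
qed



lemma rhs_eval:
  fixes mu :: "real list" and c :: real
  assumes nn: "\<And>i. i < q \<Longrightarrow> c * mu ! i \<ge> 0"
  shows "poly (\<Prod>a\<in># replicate_mset z 0 + mset (map (\<lambda>i. sqrt (c * mu ! i)) [0..<q])
        + mset (map (\<lambda>i. - sqrt (c * mu ! i)) [0..<q]). [:- a, 1:]) x
     = x ^ z * (\<Prod>i<q. (x^2 - c * mu ! i))"
proof -
  have "poly (\<Prod>a\<in># replicate_mset z 0 + mset (map (\<lambda>i. sqrt (c * mu ! i)) [0..<q])
        + mset (map (\<lambda>i. - sqrt (c * mu ! i)) [0..<q]). [:- a, 1:]) x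
     = x ^ z * ((\<Prod>i<q. (x - sqrt (c * mu ! i))) * (\<Prod>i<q. (x + sqrt (c * mu ! i))))"
    by (simp only: poly_prod_mset image_mset_union prod_mset.union prod_mset_upt) (simp add: poly_prod add.commute)
  also have "(\<Prod>i<q. (x - sqrt (c * mu ! i))) * (\<Prod>i<q. (x + sqrt (c * mu ! i))) = (\<Prod>i<q. (x^2 - c * mu ! i))"
    unfolding prod.distrib[symmetric]
  proof (rule prod.cong)
    fix i assume "i \<in> {..<q}"
    hence "(sqrt (c * mu ! i))^2 = c * mu ! i" using nn by simp
    thus "(x - sqrt (c * mu ! i)) * (x + sqrt (c * mu ! i)) = x^2 - c * mu ! i"
      by (simp add: algebra_simps power2_eq_square)
  qed simp
  finally show ?thesis .
qed

theorem theorem4p4: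
  fixes n m p k :: nat and ends :: "nat \<Rightarrow> nat \<times> nat" and sg :: "nat \<Rightarrow> real" and
    th :: "nat \<Rightarrow> nat \<Rightarrow> real" and mu :: "real list"
  assumes "signed_graph n m ends sg"
    and "connected_graph n m ends"
    and "orientation m ends sg th"
    and "length mu = n" and "sorted_wrt (\<ge>) mu"
    and "spectrum_mset (laplacian n m ends sg) (mset mu)"
    and "p \<ge> 1" and "k = p \<or> k = p - 1"
  shows "spectrum_mset (Spk_adj n m ends th p k)
     (if balanced n m ends sg then
        replicate_mset ((p - 1) * n + (k + 1) * m + 2) 0
        + mset (map (\<lambda>i. sqrt (real ((p + 1) * (k + 1)) * mu ! i)) [0..<n - 1])
        + mset (map (\<lambda>i. - sqrt (real ((p + 1) * (k + 1)) * mu ! i)) [0..<n - 1])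
      else
        replicate_mset ((p - 1) * n + (k + 1) * m) 0
        + mset (map (\<lambda>i. sqrt (real ((p + 1) * (k + 1)) * mu ! i)) [0..<n])
        + mset (map (\<lambda>i. - sqrt (real ((p + 1) * (k + 1)) * mu ! i)) [0..<n]))"
proof -
  note sgr = assms(1) and con = assms(2) and ori = assms(3) and len = assms(4)
    and sor = assms(5) and spec = assms(6) and p = assms(7)
  have n: "n > 0" using con unfolding connected_graph_def by auto
  define N where "N = incm n m ends th"
  have N: "N \<in> carrier_mat n m" by (simp add: N_def incm_def)
  have ch: "char_poly (N * N\<^sup>T) = (\<Prod>a\<in>#mset mu. [:- a, 1:])"
    using spec lap_eq[OF sgr ori] unfolding spectrum_mset_def N_def by simp
  define c where "c = real ((p + 1) * (k + 1))"
  have c0: "c \<ge> 0" by (simp add: c_def)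
  have nn: "mu ! i \<ge> 0" if "i < n" for i using mu_nonneg[OF N ch] that len by simp
  have cnn: "c * mu ! i \<ge> 0" if "i < n" for i using nn[OF that] c0 by simp
  have lhs: "poly (char_poly (Spk_adj n m ends th p k)) x
      = x ^ ((p+1)*n + (k+1)*m - 2*n) * (\<Prod>i<n. (x^2 - c * mu ! i))" if x: "x \<noteq> 0" for x
    unfolding Spk_block[OF n] c_def using main_eval[OF N n ch len p x, of k] unfolding N_def .
  have z: "(p+1)*n + (k+1)*m - 2*n = (p - 1) * n + (k + 1) * m" using p
    by (cases p) (auto simp: algebra_simps)
  show ?thesis
  proof (cases "balanced n m ends sg")
    case False
    show ?thesis unfolding spectrum_mset_def using False
      apply (simp only: if_False c_def[symmetric])
      apply (rule poly_eq_nonzero)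
      apply (subst rhs_eval)
      using cnn lhs z by auto
  next
    case True
    obtain xs where xs: "\<forall>v<n. xs v = 1 \<or> xs v = -1" "\<forall>j<m. xs (fst (ends j)) * xs (snd (ends j)) = sg j"
      using switching[OF sgr con True] by blast
    obtain i where i: "i < n" "mu ! i = 0"
      using zero_root[OF sgr ori xs n _ len] ch unfolding N_def by blast
    have last0: "mu ! (n - 1) = 0"
    proof (cases "i = n - 1")
      case False
      hence "i < n - 1" using i by simp
      hence "mu ! i \<ge> mu ! (n - 1)" using sor len n unfolding sorted_wrt_iff_nth_less by auto
      thus ?thesis using nn[of "n-1"] n i by simp
    qed (use i in simp)
    have split: "(\<Prod>i<n. (x^2 - c * mu ! i)) = (\<Prod>i<n-1. (x^2 - c * mu ! i)) * x^2" for x :: real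
    proof -
      have "n = Suc (n - 1)" using n by simp
      hence "(\<Prod>i<n. (x^2 - c * mu ! i)) = (\<Prod>i<Suc (n-1). (x^2 - c * mu ! i))" by simp
      also have "\<dots> = (\<Prod>i<n-1. (x^2 - c * mu ! i)) * x^2" by (simp only: prod.lessThan_Suc last0) simp
      finally show ?thesis .
    qed
    have "poly (char_poly (Spk_adj n m ends th p k)) x = poly (\<Prod>a\<in># replicate_mset ((p - 1) * n + (k + 1) * m + 2) 0
        + mset (map (\<lambda>i. sqrt (c * mu ! i)) [0..<n - 1])
        + mset (map (\<lambda>i. - sqrt (c * mu ! i)) [0..<n - 1]). [:- a, 1:]) x" if x: "x \<noteq> 0" for x
    proof -
      have "poly (char_poly (Spk_adj n m ends th p k)) x = x ^ ((p - 1) * n + (k + 1) * m) * ((\<Prod>i<n-1. (x^2 - c * mu ! i)) * x^2)"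
        using lhs[OF x] z split by simp
      also have "\<dots> = x ^ ((p - 1) * n + (k + 1) * m + 2) * (\<Prod>i<n-1. (x^2 - c * mu ! i))"
        by (simp add: power_add mult_ac power2_eq_square)
      also have "\<dots> = poly (\<Prod>a\<in># replicate_mset ((p - 1) * n + (k + 1) * m + 2) 0
        + mset (map (\<lambda>i. sqrt (c * mu ! i)) [0..<n - 1])
        + mset (map (\<lambda>i. - sqrt (c * mu ! i)) [0..<n - 1]). [:- a, 1:]) x"
        by (rule rhs_eval[symmetric]) (use cnn in auto)
      finally show ?thesis .
    qed
    hence "char_poly (Spk_adj n m ends th p k) = (\<Prod>a\<in># replicate_mset ((p - 1) * n + (k + 1) * m + 2) 0
        + mset (map (\<lambda>i. sqrt (c * mu ! i)) [0..<n - 1])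
        + mset (map (\<lambda>i. - sqrt (c * mu ! i)) [0..<n - 1]). [:- a, 1:])"
      by (rule poly_eq_nonzero)
    thus ?thesis unfolding spectrum_mset_def c_def using True by simp
  qed
qed

end
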